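(* Let $(M,P,g)$ be a 4-dimensional Riemannian almost product manifold with $\operatorname{tr}P=0$ and let $L$ be any Riemannian $P$-tensor on $M$. Then at every point: (1) $\rho(L)=\frac14\{\tau(L)\,g+\tau^*(L)\,\widetilde g\}$ (i.e. $M$ is almost Einstein with respect to $L$); (2) for every pair of orthonormal vectors $x,y$ spanning a totally real 2-plane (i.e. $g(x,Px)=g(x,Py)=g(y,Px)=g(y,Py)=0$) one has $L(x,y,y,x)=\tau(L)/8$, so the totally real sectional curvature with respect to $L$ is pointwise constant; (3) for every unit vector $x$ with $g(x,Px)=0$ (so that $\mathrm{span}\{x,Px\}$ is an invariant 2-plane) one has $L(x,Px,Px,x)=0$.
   Context: A Riemannian almost product manifold $(M,P,g)$: $M$ smooth, $P$ a $(1,1)$-tensor field with $P^2=\mathrm{id}$, $g$ Riemannian with $g(Px,Py)=g(x,y)$. A curvature-like tensor is a $(0,4)$-tensor $L$ with $L(x,y,z,w)=-L(y,x,z,w)=-L(x,y,w,z)$ and $L(x,y,z,w)+L(y,z,x,w)+L(z,x,y,w)=0$; it is a Riemannian $P$-tensor if moreover $L(x,y,Pz,Pw)=L(x,y,z,w)$. $\widetilde g(x,y)=g(x,Py)$. With $g^{ij}$ the inverse matrix of $g$ in a basis $\{e_i\}$: $\rho(L)(y,z)=\sum g^{ij}L(e_i,y,z,e_j)$, $\tau(L)=\sum g^{ij}\rho(L)(e_i,e_j)$, $\rho^*(L)(y,z)=\sum g^{ij}L(e_i,y,z,Pe_j)$, $\tau^*(L)=\sum g^{ij}\rho^*(L)(e_i,e_j)$.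 *)

theory Defs
  imports "HOL-Analysis.Analysis"
begin

text \<open>Pointwise (tangent-space) setting: the tangent space at a point is modelled by a
  finite-dimensional real inner product space 'a (euclidean_space), with g = inner.
  Basis is a g-orthonormal basis, so g^{ij} is the Kronecker delta.\<close>

definition multilinear4 :: "('a::real_vector \<Rightarrow> 'a \<Rightarrow> 'a \<Rightarrow> 'a \<Rightarrow> real) \<Rightarrow> bool" where
  "multilinear4 L \<longleftrightarrow>
     (\<forall>y z w. linear (\<lambda>x. L x y z w)) \<and> (\<forall>x z w. linear (\<lambda>y. L x y z w)) \<and>
     (\<forall>x y w. linear (\<lambda>z. L x y z w)) \<and> (\<forall>x y z. linear (\<lambda>w. L x y z w))"

definition curvature_like :: "('a::real_vector \<Rightarrow> 'a \<Rightarrow> 'a \<Rightarrow> 'a \<Rightarrow> real) \<Rightarrow> bool" where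
  "curvature_like L \<longleftrightarrow> multilinear4 L \<and>
     (\<forall>x y z w. L x y z w = - L y x z w) \<and>
     (\<forall>x y z w. L x y z w = - L x y w z) \<and>
     (\<forall>x y z w. L x y z w + L y z x w + L z x y w = 0)"

definition riemannian_P_tensor :: "('a::real_vector \<Rightarrow> 'a) \<Rightarrow> ('a \<Rightarrow> 'a \<Rightarrow> 'a \<Rightarrow> 'a \<Rightarrow> real) \<Rightarrow> bool" where
  "riemannian_P_tensor P L \<longleftrightarrow> curvature_like L \<and> (\<forall>x y z w. L x y (P z) (P w) = L x y z w)"

definition almost_product_structure :: "('a::real_inner \<Rightarrow> 'a) \<Rightarrow> bool" where
  "almost_product_structure P \<longleftrightarrow> linear P \<and> (\<forall>x. P (P x) = x) \<and>
     (\<forall>x y. inner (P x) (P y) = inner x y)"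

definition ptrace :: "('a::euclidean_space \<Rightarrow> 'a) \<Rightarrow> real" where
  "ptrace P = (\<Sum>b\<in>Basis. inner (P b) b)"

definition gtilde :: "('a::real_inner \<Rightarrow> 'a) \<Rightarrow> 'a \<Rightarrow> 'a \<Rightarrow> real" where
  "gtilde P x y = inner x (P y)"

definition ricci :: "('a::euclidean_space \<Rightarrow> 'a \<Rightarrow> 'a \<Rightarrow> 'a \<Rightarrow> real) \<Rightarrow> 'a \<Rightarrow> 'a \<Rightarrow> real" where
  "ricci L y z = (\<Sum>e\<in>Basis. L e y z e)"

definition scal :: "('a::euclidean_space \<Rightarrow> 'a \<Rightarrow> 'a \<Rightarrow> 'a \<Rightarrow> real) \<Rightarrow> real" where
  "scal L = (\<Sum>e\<in>Basis. ricci L e e)"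

definition ricci_star :: "('a::euclidean_space \<Rightarrow> 'a) \<Rightarrow> ('a \<Rightarrow> 'a \<Rightarrow> 'a \<Rightarrow> 'a \<Rightarrow> real) \<Rightarrow> 'a \<Rightarrow> 'a \<Rightarrow> real" where
  "ricci_star P L y z = (\<Sum>e\<in>Basis. L e y z (P e))"

definition scal_star :: "('a::euclidean_space \<Rightarrow> 'a) \<Rightarrow> ('a \<Rightarrow> 'a \<Rightarrow> 'a \<Rightarrow> 'a \<Rightarrow> real) \<Rightarrow> real" where
  "scal_star P L = (\<Sum>e\<in>Basis. ricci_star P L e e)"

end

theory Submission
  imports Defs
begin

lemma ml:
  assumes "multilinear4 L"
  shows "L (x+x') y z w = L x y z w + L x' y z w"
    "L x (y+y') z w = L x y z w + L x y' z w"
    "L x y (z+z') w = L x y z w + L x y z' w"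
    "L x y z (w+w') = L x y z w + L x y z w'"
    "L (c *\<^sub>R x) y z w = c * L x y z w"
    "L x (c *\<^sub>R y) z w = c * L x y z w"
    "L x y (c *\<^sub>R z) w = c * L x y z w"
    "L x y z (c *\<^sub>R w) = c * L x y z w"
    "L (- x) y z w = - L x y z w"
    "L x (- y) z w = - L x y z w"
    "L x y (- z) w = - L x y z w"
    "L x y z (- w) = - L x y z w"
    "L 0 y z w = 0" "L x 0 z w = 0" "L x y 0 w = 0" "L x y z 0 = 0"
proof -
  have l1: "linear (\<lambda>x. L x y z w)" and l2: "linear (\<lambda>y. L x y z w)"
   and l3: "linear (\<lambda>z. L x y z w)" and l4: "linear (\<lambda>w. L x y z w)"
   and l1': "linear (\<lambda>x. L x y z w)" and l2': "linear (\<lambda>y. L x y z w)"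
   and l3': "linear (\<lambda>z. L x y z w)" and l4': "linear (\<lambda>w. L x y z w)"
   and l1'': "linear (\<lambda>x. L x y z w)" and l2'': "linear (\<lambda>y. L x y z w)"
   and l3'': "linear (\<lambda>z. L x y z w)" and l4'': "linear (\<lambda>w. L x y z w)"
    for x y z w using assms unfolding multilinear4_def by blast+
  show "L (x+x') y z w = L x y z w + L x' y z w" using linear_add[OF l1] by simp
  show "L x (y+y') z w = L x y z w + L x y' z w" using linear_add[OF l2] by simp
  show "L x y (z+z') w = L x y z w + L x y z' w" using linear_add[OF l3] by simp
  show "L x y z (w+w') = L x y z w + L x y z w'" using linear_add[OF l4] by simp
  show "L (c *\<^sub>R x) y z w = c * L x y z w" using linear_scale[OF l1] by simp
  show "L x (c *\<^sub>R y) z w = c * L x y z w" using linear_scale[OF l2] by simp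
  show "L x y (c *\<^sub>R z) w = c * L x y z w" using linear_scale[OF l3] by simp
  show "L x y z (c *\<^sub>R w) = c * L x y z w" using linear_scale[OF l4] by simp
  show "L (- x) y z w = - L x y z w" using linear_neg[OF l1] by simp
  show "L x (- y) z w = - L x y z w" using linear_neg[OF l2] by simp
  show "L x y (- z) w = - L x y z w" using linear_neg[OF l3] by simp
  show "L x y z (- w) = - L x y z w" using linear_neg[OF l4] by simp
  show "L 0 y z w = 0" using linear_0[OF l1] by simp
  show "L x 0 z w = 0" using linear_0[OF l2] by simp
  show "L x y 0 w = 0" using linear_0[OF l3] by simp
  show "L x y z 0 = 0" using linear_0[OF l4] by simp
qed

lemma pairsym:
  assumes "curvature_like L"
  shows "L x y z w = L z w x y"
proof -
  have A1: "\<And>x y z w. L x y z w = - L y x z w" and A2: "\<And>x y z w. L x y z w = - L x y w z"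
   and B: "\<And>x y z w. L x y z w + L y z x w + L z x y w = 0"
    using assms unfolding curvature_like_def by blast+
  show ?thesis
    using B[of x y z w] B[of y z w x] B[of z w x y] B[of w x y z]
      A1[of y z x w] A1[of z x y w] A2[of y z w x] A1[of w x y z] A2[of w x y z]
      A1[of z w x y] A2[of z w x y] A1[of x y z w] A2[of x y z w] A1[of y z w x]
      A2[of z x y w] A2[of y z x w] A1[of w y z x] A2[of w y z x] A1[of x w y z]
      A2[of x w y z] A1[of z x w y] A2[of z x w y] A2[of w x z y] A1[of y w z x]
      A2[of y w z x] A1[of x z w y] A2[of x z w y] A1[of w x y z]
    by linarith
qed

lemma mixed:
  assumes R: "riemannian_P_tensor P L" and a: "P a = a" and b: "P b = - b"
  shows "L z w a b = 0" "L z w b a = 0" "L a b z w = 0" "L b a z w = 0"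
proof -
  have C: "curvature_like L" and I: "\<And>x y z w. L x y (P z) (P w) = L x y z w"
    using R unfolding riemannian_P_tensor_def by blast+
  have M: "multilinear4 L" using C unfolding curvature_like_def by blast
  have "L z w a b = L z w (P a) (P b)" using I by simp
  also have "\<dots> = - L z w a b" using a b ml[OF M] by simp
  finally show 1: "L z w a b = 0" by simp
  have "L z w b a = L z w (P b) (P a)" using I by simp
  also have "\<dots> = - L z w b a" using a b ml[OF M] by simp
  finally show 2: "L z w b a = 0" by simp
  show "L a b z w = 0" using 1 pairsym[OF C] by metis
  show "L b a z w = 0" using 2 pairsym[OF C] by metis
qed

lemma bianchi0:
  assumes R: "riemannian_P_tensor P L" and "P x = x" "P y = y" "P z = - z" "P w = - w"
  shows "L x y z w = 0" "L z w x y = 0"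
proof -
  have C: "curvature_like L" using R unfolding riemannian_P_tensor_def by blast
  have B: "L x y z w + L y z x w + L z x y w = 0" using C unfolding curvature_like_def by blast
  have "L y z x w = 0" "L z x y w = 0" using mixed[OF R] assms by auto
  then show 1: "L x y z w = 0" using B by simp
  show "L z w x y = 0" using 1 pairsym[OF C] by metis
qed

lemma decomp:
  assumes R: "riemannian_P_tensor P L"
    and "P xp = xp" "P xm = - xm" "P yp = yp" "P ym = - ym"
    and "P zp = zp" "P zm = - zm" "P wp = wp" "P wm = - wm"
  shows "L (xp+xm) (yp+ym) (zp+zm) (wp+wm) = L xp yp zp wp + L xm ym zm wm"
proof -
  have M: "multilinear4 L" using R unfolding riemannian_P_tensor_def curvature_like_def by blast
  show ?thesis
    using assms by (simp add: ml[OF M] mixed[OF R] bianchi0[OF R])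
qed

lemma twoD:
  assumes C: "curvature_like L"
  shows "L (x1 *\<^sub>R u1 + x2 *\<^sub>R u2) (y1 *\<^sub>R u1 + y2 *\<^sub>R u2) (z1 *\<^sub>R u1 + z2 *\<^sub>R u2) (w1 *\<^sub>R u1 + w2 *\<^sub>R u2)
     = (x1*y2 - x2*y1) * (z2*w1 - z1*w2) * L u1 u2 u2 u1"
proof -
  have M: "multilinear4 L" and A1: "\<And>x y z w. L x y z w = - L y x z w" and A2: "\<And>x y z w. L x y z w = - L x y w z"
    using C unfolding curvature_like_def by blast+
  have z1: "L x x z w = 0" "L x y z z = 0" for x y z w using A1[of x x z w] A2[of x y z z] by simp_all
  have e: "L u2 u1 z w = - L u1 u2 z w" "L x y u1 u2 = - L x y u2 u1" for x y z w using A1 A2 by blast+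
  show ?thesis
    by (simp add: ml[OF M] z1 e algebra_simps)
qed

lemma basis_change:
  fixes B :: "'a::euclidean_space \<Rightarrow> 'a \<Rightarrow> real"
  assumes U: "\<And>x. x = (\<Sum>u\<in>U. inner x u *\<^sub>R u)"
    and l1: "\<And>w. linear (\<lambda>v. B v w)" and l2: "\<And>v. linear (\<lambda>w. B v w)"
  shows "(\<Sum>b\<in>Basis. B b b) = (\<Sum>u\<in>U. B u u)"
proof -
  have "B b b = (\<Sum>u\<in>U. inner b u * B u b)" for b
  proof -
    have "B b b = B (\<Sum>u\<in>U. inner b u *\<^sub>R u) b" using U[of b] by simp
    also have "\<dots> = (\<Sum>u\<in>U. inner b u * B u b)"
      using linear_sum[OF l1[of b], of "\<lambda>u. inner b u *\<^sub>R u" U] linear_scale[OF l1[of b]] by simp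
    finally show ?thesis .
  qed
  then have "(\<Sum>b\<in>Basis. B b b) = (\<Sum>b\<in>Basis. \<Sum>u\<in>U. inner b u * B u b)" by simp
  also have "\<dots> = (\<Sum>u\<in>U. \<Sum>b\<in>Basis. inner b u * B u b)" by (rule sum.swap)
  also have "\<dots> = (\<Sum>u\<in>U. B u (\<Sum>b\<in>Basis. inner u b *\<^sub>R b))"
  proof (rule sum.cong[OF refl])
    fix u
    show "(\<Sum>b\<in>Basis. inner b u * B u b) = B u (\<Sum>b\<in>Basis. inner u b *\<^sub>R b)"
      using linear_sum[OF l2[of u], of "\<lambda>b. inner u b *\<^sub>R b" Basis] linear_scale[OF l2[of u]]
      by (simp add: inner_commute)
  qed
  also have "\<dots> = (\<Sum>u\<in>U. B u u)" by (simp add: euclidean_representation)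
  finally show ?thesis .
qed

lemma onb_expand:
  fixes U :: "'a::euclidean_space set"
  assumes fin: "finite U" and po: "pairwise orthogonal U" and n1: "\<And>u. u \<in> U \<Longrightarrow> norm u = 1"
    and sp: "span U = UNIV"
  shows "x = (\<Sum>u\<in>U. inner x u *\<^sub>R u)"
proof -
  define r where "r = x - (\<Sum>u\<in>U. inner x u *\<^sub>R u)"
  have "orthogonal r v" if v: "v \<in> U" for v
  proof -
    have "(\<Sum>u\<in>U. inner x u * inner u v) = inner x v * inner v v + (\<Sum>u\<in>U-{v}. inner x u * inner u v)"
      using fin v by (simp add: sum.remove)
    also have "(\<Sum>u\<in>U-{v}. inner x u * inner u v) = 0"
      using po v by (intro sum.neutral) (auto simp: pairwise_def orthogonal_def)
    also have "inner v v = 1" using n1[OF v] by (simp add: dot_square_norm)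
    finally have "(\<Sum>u\<in>U. inner x u * inner u v) = inner x v" by simp
    then show ?thesis unfolding r_def orthogonal_def
      by (simp add: inner_diff_left inner_sum_left)
  qed
  then have "orthogonal r r" using orthogonal_to_span[of r U r] sp
    by (metis UNIV_I orthogonal_commute)
  then have "r = 0" by (simp add: orthogonal_self)
  then show ?thesis unfolding r_def by simp
qed

lemma eigenbasis:
  fixes P :: "'a::euclidean_space \<Rightarrow> 'a"
  assumes D: "DIM('a) = 4" and AP: "almost_product_structure P" and T: "ptrace P = 0"
  obtains u1 u2 u3 u4 where "P u1 = u1" "P u2 = u2" "P u3 = - u3" "P u4 = - u4"
    "inner u1 u1 = 1" "inner u2 u2 = 1" "inner u3 u3 = 1" "inner u4 u4 = 1"
    "inner u1 u2 = 0" "inner u1 u3 = 0" "inner u1 u4 = 0" "inner u2 u3 = 0" "inner u2 u4 = 0" "inner u3 u4 = 0"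
    "\<And>x. x = inner x u1 *\<^sub>R u1 + inner x u2 *\<^sub>R u2 + inner x u3 *\<^sub>R u3 + inner x u4 *\<^sub>R u4"
proof -
  have lP: "linear P" and PP: "\<And>x. P (P x) = x" and iP: "\<And>x y. inner (P x) (P y) = inner x y"
    using AP unfolding almost_product_structure_def by blast+
  have sa: "inner (P x) y = inner x (P y)" for x y using iP[of x "P y"] PP[of y] by simp
  have Padd: "P (x + y) = P x + P y" and Psc: "P (c *\<^sub>R x) = c *\<^sub>R P x" and P0: "P 0 = 0"
    and Pdiff: "P (x - y) = P x - P y" for x y c
    using lP by (simp_all add: linear_add linear_scale linear_0 linear_diff)
  define Vp where "Vp = {x. P x = x}"
  define Vm where "Vm = {x. P x = - x}"
  have sVp: "subspace Vp" unfolding subspace_def Vp_def by (simp add: Padd Psc P0)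
  have sVm: "subspace Vm" unfolding subspace_def Vm_def by (simp add: Padd Psc P0)
  obtain Bp where Bp: "Bp \<subseteq> Vp" "pairwise orthogonal Bp" "\<And>x. x \<in> Bp \<Longrightarrow> norm x = 1"
      "independent Bp" "span Bp = Vp"
    using orthonormal_basis_subspace[OF sVp] by metis
  obtain Bm where Bm: "Bm \<subseteq> Vm" "pairwise orthogonal Bm" "\<And>x. x \<in> Bm \<Longrightarrow> norm x = 1"
      "independent Bm" "span Bm = Vm"
    using orthonormal_basis_subspace[OF sVm] by metis
  have fBp: "finite Bp" using Bp(4) independent_imp_finite by blast
  have fBm: "finite Bm" using Bm(4) independent_imp_finite by blast
  define U where "U = Bp \<union> Bm"
  have fU: "finite U" using fBp fBm U_def by simp
  have cross: "inner u v = 0" if "u \<in> Bp" "v \<in> Bm" for u v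
  proof -
    have "P u = u" "P v = - v" using that Bp(1) Bm(1) unfolding Vp_def Vm_def by auto
    then have "inner u v = - inner u v" using sa[of u v] by simp
    then show ?thesis by simp
  qed
  have disj: "Bp \<inter> Bm = {}"
  proof (rule ccontr)
    assume "Bp \<inter> Bm \<noteq> {}"
    then obtain u where u: "u \<in> Bp" "u \<in> Bm" by blast
    then have "inner u u = 0" using cross by blast
    moreover have "norm u = 1" using u Bp(3) by blast
    ultimately show False by simp
  qed
  have poU: "pairwise orthogonal U" unfolding U_def pairwise_def
    using Bp(2) Bm(2) cross unfolding pairwise_def orthogonal_def
    by (auto, metis inner_commute)
  have n1U: "\<And>u. u \<in> U \<Longrightarrow> norm u = 1" using Bp(3) Bm(3) U_def by blast
  have spU: "span U = UNIV"
  proof -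
    have "x \<in> span U" for x
    proof -
      have a: "(1/2) *\<^sub>R (x + P x) \<in> Vp" unfolding Vp_def by (simp add: Padd Psc PP)
      have b: "(1/2) *\<^sub>R (x - P x) \<in> Vm" unfolding Vm_def by (simp add: Pdiff Psc PP algebra_simps)
      have "(1/2) *\<^sub>R (x + P x) \<in> span U" using a Bp(5) span_mono[of Bp U] U_def by blast
      moreover have "(1/2) *\<^sub>R (x - P x) \<in> span U" using b Bm(5) span_mono[of Bm U] U_def by blast
      ultimately have "(1/2) *\<^sub>R (x + P x) + (1/2) *\<^sub>R (x - P x) \<in> span U" by (rule span_add)
      moreover have "(1/2) *\<^sub>R (x + P x) + (1/2) *\<^sub>R (x - P x) = x" by (simp add: algebra_simps flip: scaleR_add_left)
      ultimately show ?thesis by simp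
    qed
    then show ?thesis by blast
  qed
  have indU: "independent U"
    using pairwise_orthogonal_independent[OF poU] n1U by force
  have cU: "card U = 4" using basis_card_eq_dim[of U UNIV] indU spU D by simp
  have exU: "\<And>x. x = (\<Sum>u\<in>U. inner x u *\<^sub>R u)" using onb_expand[OF fU poU n1U spU] by blast
  have lin1: "linear (\<lambda>v. inner (P v) w)" for w
    by (rule linearI) (simp_all add: Padd Psc inner_add_left)
  have lin2: "linear (\<lambda>w. inner (P v) w)" for v
    by (rule linearI) (simp_all add: inner_add_right)
  have "ptrace P = (\<Sum>u\<in>U. inner (P u) u)"
    unfolding ptrace_def using basis_change[of U "\<lambda>v w. inner (P v) w", OF exU lin1 lin2] by simp
  also have "\<dots> = (\<Sum>u\<in>Bp. inner (P u) u) + (\<Sum>u\<in>Bm. inner (P u) u)"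
    unfolding U_def using fBp fBm disj by (simp add: sum.union_disjoint)
  also have "(\<Sum>u\<in>Bp. inner (P u) u) = (\<Sum>u\<in>Bp. 1)"
    using Bp(1,3) unfolding Vp_def by (intro sum.cong) (auto simp: dot_square_norm)
  also have "(\<Sum>u\<in>Bm. inner (P u) u) = (\<Sum>u\<in>Bm. -1)"
    using Bm(1,3) unfolding Vm_def by (intro sum.cong) (auto simp: dot_square_norm)
  finally have "real (card Bp) - real (card Bm) = 0" using T by simp
  moreover have "card Bp + card Bm = 4" using cU card_Un_disjoint[OF fBp fBm disj] U_def by simp
  ultimately have "card Bp = 2" "card Bm = 2" by linarith+
  then obtain u1 u2 u3 u4 where e1: "Bp = {u1,u2}" "u1 \<noteq> u2" and e2: "Bm = {u3,u4}" "u3 \<noteq> u4"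
    by (meson card_2_iff)
  have inU: "u1 \<in> U" "u2 \<in> U" "u3 \<in> U" "u4 \<in> U" using e1 e2 U_def by auto
  have d: "u1 \<noteq> u3" "u1 \<noteq> u4" "u2 \<noteq> u3" "u2 \<noteq> u4" using disj e1 e2 by auto
  have U4: "U = {u1,u2,u3,u4}" using e1 e2 U_def by auto
  have o: "inner u v = 0" if "u \<in> U" "v \<in> U" "u \<noteq> v" for u v
    using poU that unfolding pairwise_def orthogonal_def by blast
  have n: "inner u u = 1" if "u \<in> U" for u using n1U[OF that] by (simp add: dot_square_norm)
  show ?thesis
  proof
    show "P u1 = u1" "P u2 = u2" using e1 Bp(1) Vp_def by auto
    show "P u3 = - u3" "P u4 = - u4" using e2 Bm(1) Vm_def by auto
    show "inner u1 u1 = 1" "inner u2 u2 = 1" "inner u3 u3 = 1" "inner u4 u4 = 1" using n inU by auto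
    show "inner u1 u2 = 0" "inner u1 u3 = 0" "inner u1 u4 = 0" "inner u2 u3 = 0" "inner u2 u4 = 0" "inner u3 u4 = 0"
      using o inU d e1 e2 by auto
    fix x
    show "x = inner x u1 *\<^sub>R u1 + inner x u2 *\<^sub>R u2 + inner x u3 *\<^sub>R u3 + inner x u4 *\<^sub>R u4"
      using exU[of x] unfolding U4 using e1 e2 d by (simp add: add.assoc)
  qed
qed

theorem proposition3p3:
  fixes P :: "'a::euclidean_space \<Rightarrow> 'a"
    and L :: "'a \<Rightarrow> 'a \<Rightarrow> 'a \<Rightarrow> 'a \<Rightarrow> real"
  assumes "DIM('a) = 4"
    and "almost_product_structure P"
    and "ptrace P = 0"
    and "riemannian_P_tensor P L"
  shows "(\<forall>y z. ricci L y z = (1/4) * (scal L * inner y z + scal_star P L * gtilde P y z))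
       \<and> (\<forall>x y. norm x = 1 \<and> norm y = 1 \<and> inner x y = 0 \<and>
              inner x (P x) = 0 \<and> inner x (P y) = 0 \<and> inner y (P x) = 0 \<and> inner y (P y) = 0
              \<longrightarrow> L x y y x = scal L / 8)
       \<and> (\<forall>x. norm x = 1 \<and> inner x (P x) = 0 \<longrightarrow> L x (P x) (P x) x = 0)"
proof -
  note R = assms(4)
  have C: "curvature_like L" using R unfolding riemannian_P_tensor_def by blast
  have M: "multilinear4 L" using C unfolding curvature_like_def by blast
  have lP: "linear P" and PP: "\<And>x. P (P x) = x" and iP: "\<And>x y. inner (P x) (P y) = inner x y"
    using assms(2) unfolding almost_product_structure_def by blast+
  have sa: "inner (P x) y = inner x (P y)" for x y using iP[of x "P y"] PP[of y] by simp
  have Padd: "P (x + y) = P x + P y" and Psc: "P (c *\<^sub>R x) = c *\<^sub>R P x"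
    and Pneg: "P (- x) = - P x" for x y c
    using lP by (simp_all add: linear_add linear_scale linear_neg)
  obtain u1 u2 u3 u4 where Pu: "P u1 = u1" "P u2 = u2" "P u3 = - u3" "P u4 = - u4"
    and nn: "inner u1 u1 = 1" "inner u2 u2 = 1" "inner u3 u3 = 1" "inner u4 u4 = 1"
    and oo: "inner u1 u2 = 0" "inner u1 u3 = 0" "inner u1 u4 = 0" "inner u2 u3 = 0" "inner u2 u4 = 0" "inner u3 u4 = 0"
    and ex: "\<And>x. x = inner x u1 *\<^sub>R u1 + inner x u2 *\<^sub>R u2 + inner x u3 *\<^sub>R u3 + inner x u4 *\<^sub>R u4"
    using eigenbasis[OF assms(1-3)] by metis
  have oo': "inner u2 u1 = 0" "inner u3 u1 = 0" "inner u4 u1 = 0" "inner u3 u2 = 0" "inner u4 u2 = 0" "inner u4 u3 = 0"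
    using oo by (simp_all add: inner_commute)
  define a where "a = L u1 u2 u2 u1"
  define b where "b = L u3 u4 u4 u3"
  define pp where "pp v = inner v u1 *\<^sub>R u1 + inner v u2 *\<^sub>R u2" for v
  define mm where "mm v = inner v u3 *\<^sub>R u3 + inner v u4 *\<^sub>R u4" for v
  have ex2: "pp v + mm v = v" for v using ex[of v] unfolding pp_def mm_def by (simp add: add.assoc)
  have Ppp: "P (pp v) = pp v" and Pmm: "P (mm v) = - mm v" for v
    unfolding pp_def mm_def by (simp_all add: Padd Psc Pu)
  have Lf: "L x y z w = a * (inner x u1 * inner y u2 - inner x u2 * inner y u1) * (inner z u2 * inner w u1 - inner z u1 * inner w u2)
     + b * (inner x u3 * inner y u4 - inner x u4 * inner y u3) * (inner z u4 * inner w u3 - inner z u3 * inner w u4)" (is "_ = ?rhs") for x y z w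
  proof -
    have "L x y z w = L (pp x + mm x) (pp y + mm y) (pp z + mm z) (pp w + mm w)" by (simp only: ex2)
    also have "\<dots> = L (pp x) (pp y) (pp z) (pp w) + L (mm x) (mm y) (mm z) (mm w)"
      by (rule decomp[OF R]) (simp_all add: Ppp Pmm)
    also have "\<dots> = ?rhs" unfolding pp_def mm_def twoD[OF C] a_def b_def by (simp add: algebra_simps)
    finally show ?thesis .
  qed
  have ip: "inner x y = inner x u1 * inner y u1 + inner x u2 * inner y u2 + inner x u3 * inner y u3 + inner x u4 * inner y u4" for x y
  proof -
    have "inner x y = inner (inner x u1 *\<^sub>R u1 + inner x u2 *\<^sub>R u2 + inner x u3 *\<^sub>R u3 + inner x u4 *\<^sub>R u4) y"
      using ex[of x] by simp
    also have "\<dots> = inner x u1 * inner u1 y + inner x u2 * inner u2 y + inner x u3 * inner u3 y + inner x u4 * inner u4 y"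
      by (simp only: inner_add_left inner_scaleR_left)
    finally show ?thesis by (simp add: inner_commute[of _ y])
  qed
  have cP: "inner (P x) u1 = inner x u1" "inner (P x) u2 = inner x u2" "inner (P x) u3 = - inner x u3" "inner (P x) u4 = - inner x u4" for x
    using sa[of x] Pu by simp_all
  have ipP: "inner x (P y) = inner x u1 * inner y u1 + inner x u2 * inner y u2 - inner x u3 * inner y u3 - inner x u4 * inner y u4" for x y
    using ip[of x "P y"] cP[of y] by simp
  have dist: "u1 \<noteq> u2" "u1 \<noteq> u3" "u1 \<noteq> u4" "u2 \<noteq> u3" "u2 \<noteq> u4" "u3 \<noteq> u4"
    using nn oo by auto
  have exU: "\<And>x. x = (\<Sum>u\<in>{u1,u2,u3,u4}. inner x u *\<^sub>R u)"
    using ex dist by (simp add: add.assoc)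
  have sumU: "(\<Sum>u\<in>{u1,u2,u3,u4}. f u) = f u1 + f u2 + f u3 + f u4" for f :: "'a \<Rightarrow> real"
    using dist by (simp add: add.assoc)
  have ric: "ricci L y z = a * (inner y u1 * inner z u1 + inner y u2 * inner z u2) + b * (inner y u3 * inner z u3 + inner y u4 * inner z u4)" for y z
  proof -
    have l1: "linear (\<lambda>v. L v y z w)" for w using M unfolding multilinear4_def by blast
    have l2: "linear (\<lambda>w. L v y z w)" for v using M unfolding multilinear4_def by blast
    have "ricci L y z = L u1 y z u1 + L u2 y z u2 + L u3 y z u3 + L u4 y z u4"
      unfolding ricci_def using basis_change[of "{u1,u2,u3,u4}" "\<lambda>v w. L v y z w", OF exU l1 l2] sumU by simp
    then show ?thesis by (simp add: Lf nn oo oo' algebra_simps)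
  qed
  have rics: "ricci_star P L y z = a * (inner y u1 * inner z u1 + inner y u2 * inner z u2) - b * (inner y u3 * inner z u3 + inner y u4 * inner z u4)" for y z
  proof -
    have l1: "linear (\<lambda>v. L v y z (P w))" for w using M unfolding multilinear4_def by blast
    have l2: "linear (\<lambda>w. L v y z (P w))" for v
      by (rule linearI) (simp_all add: Padd Psc ml[OF M])
    have "ricci_star P L y z = L u1 y z (P u1) + L u2 y z (P u2) + L u3 y z (P u3) + L u4 y z (P u4)"
      unfolding ricci_star_def using basis_change[of "{u1,u2,u3,u4}" "\<lambda>v w. L v y z (P w)", OF exU l1 l2] sumU by simp
    then show ?thesis by (simp add: Pu ml[OF M] Lf nn oo oo' algebra_simps)
  qed
  have scal: "scal L = 2*a + 2*b"
  proof -
    have l1: "linear (\<lambda>v. ricci L v w)" for w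
      by (rule linearI) (simp_all add: ric inner_add_left algebra_simps)
    have l2: "linear (\<lambda>w. ricci L v w)" for v
      by (rule linearI) (simp_all add: ric inner_add_left algebra_simps)
    have "scal L = ricci L u1 u1 + ricci L u2 u2 + ricci L u3 u3 + ricci L u4 u4"
      unfolding scal_def using basis_change[of "{u1,u2,u3,u4}" "\<lambda>v w. ricci L v w", OF exU l1 l2] sumU by simp
    then show ?thesis by (simp add: ric nn oo oo')
  qed
  have scals: "scal_star P L = 2*a - 2*b"
  proof -
    have l1: "linear (\<lambda>v. ricci_star P L v w)" for w
      by (rule linearI) (simp_all add: rics inner_add_left algebra_simps)
    have l2: "linear (\<lambda>w. ricci_star P L v w)" for v
      by (rule linearI) (simp_all add: rics inner_add_left algebra_simps)
    have "scal_star P L = ricci_star P L u1 u1 + ricci_star P L u2 u2 + ricci_star P L u3 u3 + ricci_star P L u4 u4"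
      unfolding scal_star_def using basis_change[of "{u1,u2,u3,u4}" "\<lambda>v w. ricci_star P L v w", OF exU l1 l2] sumU by simp
    then show ?thesis by (simp add: rics nn oo oo')
  qed
  have part1: "ricci L y z = (1/4) * (scal L * inner y z + scal_star P L * gtilde P y z)" for y z
    unfolding gtilde_def scal scals ric ip[of y z] ipP[of y z] by (simp add: algebra_simps)
  have part2: "L x y y x = scal L / 8"
    if h: "norm x = 1" "norm y = 1" "inner x y = 0" "inner x (P x) = 0" "inner x (P y) = 0" "inner y (P x) = 0" "inner y (P y) = 0" for x y
  proof -
    define x1 where "x1 = inner x u1" define x2 where "x2 = inner x u2"
    define x3 where "x3 = inner x u3" define x4 where "x4 = inner x u4"
    define y1 where "y1 = inner y u1" define y2 where "y2 = inner y u2"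
    define y3 where "y3 = inner y u3" define y4 where "y4 = inner y u4"
    have nx: "inner x x = 1" "inner y y = 1" using h(1,2) by (simp_all add: dot_square_norm)
    have e1: "x1*x1+x2*x2+x3*x3+x4*x4 = 1" using nx(1) ip[of x x] unfolding x1_def x2_def x3_def x4_def by simp
    have e2: "y1*y1+y2*y2+y3*y3+y4*y4 = 1" using nx(2) ip[of y y] unfolding y1_def y2_def y3_def y4_def by simp
    have e3: "x1*y1+x2*y2+x3*y3+x4*y4 = 0" using h(3) ip[of x y] unfolding x1_def x2_def x3_def x4_def y1_def y2_def y3_def y4_def by simp
    have e4: "x1*x1+x2*x2-x3*x3-x4*x4 = 0" using h(4) ipP[of x x] unfolding x1_def x2_def x3_def x4_def by simp
    have e5: "y1*y1+y2*y2-y3*y3-y4*y4 = 0" using h(7) ipP[of y y] unfolding y1_def y2_def y3_def y4_def by simp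
    have e6: "x1*y1+x2*y2-x3*y3-x4*y4 = 0" using h(5) ipP[of x y] unfolding x1_def x2_def x3_def x4_def y1_def y2_def y3_def y4_def by simp
    have f1: "x1*x1+x2*x2 = 1/2" "x3*x3+x4*x4 = 1/2" using e1 e4 by linarith+
    have f2: "y1*y1+y2*y2 = 1/2" "y3*y3+y4*y4 = 1/2" using e2 e5 by linarith+
    have f3: "x1*y1+x2*y2 = 0" "x3*y3+x4*y4 = 0" using e3 e6 by linarith+
    have g1: "(x1*y2-x2*y1)^2 = (x1*x1+x2*x2)*(y1*y1+y2*y2) - (x1*y1+x2*y2)^2" by algebra
    have g2: "(x3*y4-x4*y3)^2 = (x3*x3+x4*x4)*(y3*y3+y4*y4) - (x3*y3+x4*y4)^2" by algebra
    have "L x y y x = a * (x1*y2-x2*y1)^2 + b * (x3*y4-x4*y3)^2"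
      unfolding Lf x1_def x2_def x3_def x4_def y1_def y2_def y3_def y4_def by (simp add: power2_eq_square algebra_simps)
    also have "\<dots> = (a + b)/4" unfolding g1 g2 f1 f2 f3 by simp
    finally show ?thesis unfolding scal by simp
  qed
  have part3: "L x (P x) (P x) x = 0" for x
    unfolding Lf cP by (simp add: algebra_simps)
  show ?thesis using part1 part2 part3 by blast
qed
end
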